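(* Suppose the plant is exactly the LSTM network \[ \begin{aligned} x^+ &= \sigma_g(W_f u + U_f \xi + b_f)\circ x + \sigma_g(W_i u + U_i \xi + b_i)\circ \sigma_c(W_c u + U_c \xi + b_c),\\ \xi^+ &= \sigma_g(W_o u + U_o \xi + b_o)\circ \sigma_c(x^+),\qquad y = C\xi + b_y, \end{aligned} \] with inputs in $\mathcal{U}=[-u_{\max},u_{\max}]^{n_u}$, and that $\rho(A_\delta)<1$. Consider the observer with state $\hat\chi=(\hat x,\hat\xi)$ and gains $L_f,L_i,L_o\in\mathbb{R}^{n_x\times n_y}$: \[ \begin{aligned} \hat x^+ &= \sigma_g[W_f u + U_f\hat\xi + b_f + L_f(y-\hat y)]\circ\hat x + \sigma_g[W_i u + U_i\hat\xi + b_i + L_i(y-\hat y)]\circ\sigma_c(W_c u + U_c\hat\xi + b_c),\\ \hat\xi^+ &= \sigma_g[W_o u + U_o\hat\xi + b_o + L_o(y-\hat y)]\circ\sigma_c(\hat x^+),\qquad \hat y = C\hat\xi + b_y. \end{aligned} \] Let \[ \hat A=\begin{bmatrix}\hat{\bar\sigma}_g^f & \hat\alpha\\ \hat{\bar\sigma}_g^f\hat{\bar\sigma}_g^o & \tfrac14\bar{\sigma}_c^x\|U_o-L_oC\|+\hat{\bar\sigma}_g^o\hat\alpha\end{bmatrix}. \] If $\rho(\hat A)<1$, then the state estimate converges: $\hat\chi(k)-\chi(k)\to0$ as $k\to\infty$.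
   Context: $\sigma_g(t)=1/(1+e^{-t})$, $\sigma_c=\tanh$, applied entrywise; $\circ$ is the Hadamard product; $\|\cdot\|$ is the induced 2-norm, $\|\cdot\|_\infty$ the induced $\infty$-norm, $\rho$ the spectral radius; $[\cdot\ \cdots\ \cdot]$ is horizontal concatenation. Quantities: $\bar{\sigma}_g^\star=\sigma_g(\|[W_\star u_{\max}\ U_\star\ b_\star]\|_\infty)$ for $\star\in\{f,i,o\}$; $\bar{\sigma}_c^c=\sigma_c(\|[W_c u_{\max}\ U_c\ b_c]\|_\infty)$; $\bar{\sigma}_c^x=\sigma_c(\bar{\sigma}_g^i\bar{\sigma}_c^c/(1-\bar{\sigma}_g^f))$; $\alpha=\tfrac14\|U_f\|\frac{\bar{\sigma}_g^i\bar{\sigma}_c^c}{1-\bar{\sigma}_g^f}+\bar{\sigma}_g^i\|U_c\|+\tfrac14\|U_i\|\bar{\sigma}_c^c$; $A_\delta=\begin{bmatrix}\bar{\sigma}_g^f & \alpha\\ \bar{\sigma}_g^o\bar{\sigma}_g^f & \alpha\bar{\sigma}_g^o+\tfrac14\bar{\sigma}_c^x\|U_o\|\end{bmatrix}$. Observer quantities: $\hat{\bar\sigma}_g^\star=\sigma_g(\|[W_\star u_{\max}\ \ U_\star-L_\star C\ \ b_\star\ \ L_\star C]\|_\infty)$ for $\star\in\{f,i,o\}$; $\hat\alpha=\tfrac14\|U_f-L_fC\|\frac{\bar{\sigma}_g^i\bar{\sigma}_c^c}{1-\bar{\sigma}_g^f}+\bar{\sigma}_g^i\|U_c\|+\tfrac14\|U_i-L_iC\|\bar{\sigma}_c^c$.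 Plant and observer states are taken with $\xi,\hat\xi\in(-1,1)^{n_x}$ and $|x_{(j)}|,|\hat x_{(j)}|$ within the invariant bounds of the respective dynamics. *)

theory Defs
  imports "HOL-Analysis.Analysis"
begin

(* logistic sigmoid, the gate activation sigma_g; the cell activation sigma_c is tanh *)
definition sigmoid :: "real \<Rightarrow> real" where
  "sigmoid t = 1 / (1 + exp (- t))"

definition vmap :: "(real \<Rightarrow> real) \<Rightarrow> real^'n \<Rightarrow> real^'n" where
  "vmap f v = (\<chi> i. f (v $ i))"

definition hadamard :: "real^'n \<Rightarrow> real^'n \<Rightarrow> real^'n" (infixl "\<circ>\<^sub>h" 70) where
  "a \<circ>\<^sub>h b = (\<chi> i. a $ i * b $ i)"

definition opnorm2 :: "real^'m^'n \<Rightarrow> real" where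
  "opnorm2 A = onorm (\<lambda>v. A *v v)"

(* induced infinity-norm (maximum absolute row sum) of the horizontal concatenation
   [W*umax  U  b] *)
definition inf_norm_WUb :: "real^'u^'n \<Rightarrow> real^'x^'n \<Rightarrow> real^'n \<Rightarrow> real \<Rightarrow> real" where
  "inf_norm_WUb W U b umax =
     Max (range (\<lambda>i. (\<Sum>j\<in>UNIV. \<bar>umax * W $ i $ j\<bar>) + (\<Sum>j\<in>UNIV. \<bar>U $ i $ j\<bar>) + \<bar>b $ i\<bar>))"

(* induced infinity-norm of [W*umax  U-LC  b  LC] *)
definition inf_norm_obs :: "real^'u^'n \<Rightarrow> real^'n^'n \<Rightarrow> real^'n \<Rightarrow> real^'y^'n \<Rightarrow> real^'n^'y \<Rightarrow> real \<Rightarrow> real" where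
  "inf_norm_obs W U b L C umax =
     Max (range (\<lambda>i. (\<Sum>j\<in>UNIV. \<bar>umax * W $ i $ j\<bar>) + (\<Sum>j\<in>UNIV. \<bar>(U - L ** C) $ i $ j\<bar>)
                     + \<bar>b $ i\<bar> + (\<Sum>j\<in>UNIV. \<bar>(L ** C) $ i $ j\<bar>)))"

definition sig_bar :: "real^'u^'n \<Rightarrow> real^'n^'n \<Rightarrow> real^'n \<Rightarrow> real \<Rightarrow> real" where
  "sig_bar W U b umax = sigmoid (inf_norm_WUb W U b umax)"

definition tanh_bar :: "real^'u^'n \<Rightarrow> real^'n^'n \<Rightarrow> real^'n \<Rightarrow> real \<Rightarrow> real" where
  "tanh_bar W U b umax = tanh (inf_norm_WUb W U b umax)"

definition sig_hat :: "real^'u^'n \<Rightarrow> real^'n^'n \<Rightarrow> real^'n \<Rightarrow> real^'y^'n \<Rightarrow> real^'n^'y \<Rightarrow> real \<Rightarrow> real" where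
  "sig_hat W U b L C umax = sigmoid (inf_norm_obs W U b L C umax)"

definition mat2 :: "real \<Rightarrow> real \<Rightarrow> real \<Rightarrow> real \<Rightarrow> real^2^2" where
  "mat2 a b c d = (\<chi> i j. if i = 1 then (if j = 1 then a else b) else (if j = 1 then c else d))"

definition spectral_radius :: "real^'n^'n \<Rightarrow> real" where
  "spectral_radius A = Max {cmod z | z. \<exists>v :: complex^'n. v \<noteq> 0 \<and>
        (\<chi> i j. complex_of_real (A $ i $ j)) *v v = z *s v}"

end

theory Submission
  imports Defs
begin


lemma sig_den: "1 + exp (-t) > (0::real)"
  by (smt (verit) exp_gt_zero)

lemma sig_ne: "1 + exp (-t) \<noteq> (0::real)"
  by (smt (verit) exp_gt_zero)

lemma sigmoid_pos: "sigmoid t > 0"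
  unfolding sigmoid_def by (metis sig_den divide_pos_pos zero_less_one)
lemma sigmoid_lt1: "sigmoid t < 1"
  unfolding sigmoid_def by (smt (verit) sig_den exp_gt_zero divide_less_eq_1_pos)
lemma sigmoid_mono: "s \<le> t \<Longrightarrow> sigmoid s \<le> sigmoid t"
  unfolding sigmoid_def by (simp add: add_pos_pos frac_le)

lemma sigmoid_deriv: "(sigmoid has_field_derivative exp (-t) / (1 + exp (-t))^2) (at t)"
  using sig_ne[of t] unfolding sigmoid_def
  by (auto intro!: derivative_eq_intros simp: power2_eq_square field_simps add_pos_pos)

lemma sigmoid_lip: "\<bar>sigmoid s - sigmoid t\<bar> \<le> 1/4 * \<bar>s - t\<bar>"
proof -
  have b: "norm (exp (-z) / (1 + exp (-z))^2) \<le> 1/4" for z :: real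
  proof -
    have "4 * exp (-z) \<le> (1 + exp (-z))^2"
      using sum_power2_ge_zero[of "1 - exp(-z)" 0] by (simp add: power2_eq_square algebra_simps)
    moreover have pos: "(1 + exp (-z))^2 > 0" using exp_gt_zero[of "-z"] by (smt (verit) zero_less_power2)
    ultimately have "exp (-z) / (1 + exp (-z))^2 \<le> 1/4"
      by (simp add: pos_divide_le_eq[OF pos])
    thus ?thesis by simp
  qed
  have "norm (sigmoid s - sigmoid t) \<le> 1/4 * norm (s - t)"
    by (rule field_differentiable_bound[OF convex_UNIV _ b])
       (auto intro: has_field_derivative_at_within sigmoid_deriv)
  thus ?thesis by simp
qed

lemma tanh_lip: "\<bar>tanh s - tanh t\<bar> \<le> \<bar>s - (t::real)\<bar>"
proof -
  have b: "norm (1 - tanh z ^ 2) \<le> 1" for z :: real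
  proof -
    have "tanh z ^ 2 < 1" using tanh_real_bounds[of z] abs_square_less_1 by fastforce
    thus ?thesis using zero_le_power2[of "tanh z"] by (simp add: abs_le_iff)
  qed
  have "norm (tanh s - tanh t) \<le> 1 * norm (s - t)"
    by (rule field_differentiable_bound[OF convex_UNIV _ b])
       (auto intro: has_field_derivative_at_within has_field_derivative_tanh[of "\<lambda>x. x" _ 1, simplified])
  thus ?thesis by simp
qed

lemma norm_entry_bound:
  fixes a b :: "real^'n"
  assumes "\<And>i. \<bar>a$i\<bar> \<le> M * \<bar>b$i\<bar>" "M \<ge> 0"
  shows "norm a \<le> M * norm b"
proof -
  have "norm a = L2_set (\<lambda>i. \<bar>a$i\<bar>) UNIV" by (simp add: norm_vec_def)
  also have "\<dots> \<le> L2_set (\<lambda>i. M * \<bar>b$i\<bar>) UNIV"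
    by (rule L2_set_mono) (use assms in auto)
  also have "\<dots> = M * L2_set (\<lambda>i. \<bar>b$i\<bar>) UNIV"
    by (rule L2_set_right_distrib[symmetric]) fact
  also have "\<dots> = M * norm b" by (simp add: norm_vec_def)
  finally show ?thesis .
qed

lemma opnorm2: "norm (A *v v) \<le> opnorm2 A * norm (v :: real^'n)"
  unfolding opnorm2_def by (rule onorm) simp

lemma opnorm2_nonneg: "opnorm2 (A :: real^'n^'m) \<ge> 0"
  unfolding opnorm2_def by (rule onorm_pos_le) simp



lemma mat2_comp:
  "((\<chi> i j. complex_of_real (mat2 a b c d $ i $ j)) *v v) $ 1 = a * v$1 + b * v$2"
  "((\<chi> i j. complex_of_real (mat2 a b c d $ i $ j)) *v v) $ 2 = c * v$1 + d * v$2"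
  by (simp_all add: matrix_vector_mult_def sum_2 mat2_def)

lemma mat2_eig_iff:
  "((\<chi> i j. complex_of_real (mat2 a b c d $ i $ j)) *v v = z *s v) \<longleftrightarrow>
    (a * v$1 + b * v$2 = z * v$1 \<and> c * v$1 + d * v$2 = z * v$2)"
  unfolding vec_eq_iff forall_2 mat2_comp by simp

lemma mat2_eig_eq:
  fixes v :: "complex^2"
  assumes "v \<noteq> 0" "(\<chi> i j. complex_of_real (mat2 a b c d $ i $ j)) *v v = z *s v"
  shows "(z - a) * (z - d) = b * c"
proof -
  have e1: "(z - a) * v$1 = b * v$2" and e2: "(z - d) * v$2 = c * v$1"
    using assms(2) unfolding mat2_eig_iff by (simp_all add: algebra_simps)
  have "v$1 \<noteq> 0 \<or> v$2 \<noteq> 0" using assms(1) by (auto simp: vec_eq_iff forall_2)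
  moreover have "((z - a) * (z - d) - b * c) * v$1 = 0"
  proof -
    have "(z - a) * (z - d) * v$1 = (z - d) * ((z - a) * v$1)" by (simp add: ac_simps)
    also have "\<dots> = b * ((z - d) * v$2)" using e1 by (simp add: ac_simps)
    also have "\<dots> = b * c * v$1" using e2 by (simp add: ac_simps)
    finally show ?thesis by (simp add: algebra_simps)
  qed
  moreover have "((z - a) * (z - d) - b * c) * v$2 = 0"
  proof -
    have "(z - a) * (z - d) * v$2 = (z - a) * ((z - d) * v$2)" by (simp add: ac_simps)
    also have "\<dots> = c * ((z - a) * v$1)" using e2 by (simp add: ac_simps)
    also have "\<dots> = b * c * v$2" using e1 by (simp add: ac_simps)
    finally show ?thesis by (simp add: algebra_simps)
  qed
  ultimately show ?thesis by auto
qed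

lemma mat2_eig_finite:
  "finite {cmod z | z. \<exists>v :: complex^2. v \<noteq> 0 \<and>
        (\<chi> i j. complex_of_real (mat2 a b c d $ i $ j)) *v v = z *s v}"
proof -
  define D where "D = complex_of_real ((a - d)^2 + 4 * (b * c))"
  define r1 where "r1 = (a + d + csqrt D) / 2"
  define r2 where "r2 = (a + d - csqrt D) / 2"
  have fin: "finite {r1, r2}" by simp
  have sub: "{z. \<exists>v :: complex^2. v \<noteq> 0 \<and>
        (\<chi> i j. complex_of_real (mat2 a b c d $ i $ j)) *v v = z *s v} \<subseteq> {r1, r2}"
  proof
    fix z assume "z \<in> {z. \<exists>v :: complex^2. v \<noteq> 0 \<and>
        (\<chi> i j. complex_of_real (mat2 a b c d $ i $ j)) *v v = z *s v}"
    then obtain v :: "complex^2" where "v \<noteq> 0" "(\<chi> i j. complex_of_real (mat2 a b c d $ i $ j)) *v v = z *s v" by auto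
    from mat2_eig_eq[OF this] have e: "(z - a) * (z - d) = b * c" .
    have sq: "csqrt D * csqrt D = D" using power2_csqrt[of D] by (simp add: power2_eq_square)
    have "(z - r1) * (z - r2) = (z - a) * (z - d) - b * c"
      unfolding r1_def r2_def using sq unfolding D_def
      by (simp add: field_simps power2_eq_square)
    hence "(z - r1) * (z - r2) = 0" using e by simp
    thus "z \<in> {r1, r2}" by auto
  qed
  have "{cmod z | z. \<exists>v :: complex^2. v \<noteq> 0 \<and>
        (\<chi> i j. complex_of_real (mat2 a b c d $ i $ j)) *v v = z *s v} \<subseteq> cmod ` {r1, r2}"
    using sub by blast
  thus ?thesis by (rule finite_subset) simp
qed

lemma mat2_real_eig:
  fixes a b c d l :: real
  assumes "(l - a) * (l - d) = b * c"
  shows "\<bar>l\<bar> \<le> spectral_radius (mat2 a b c d)"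
proof -
  have ex: "\<exists>v :: complex^2. v \<noteq> 0 \<and>
    (\<chi> i j. complex_of_real (mat2 a b c d $ i $ j)) *v v = complex_of_real l *s v"
  proof (cases "b = 0")
    case False
    let ?v = "vector [complex_of_real b, complex_of_real (l - a)] :: complex^2"
    have "c * b + d * (l - a) = l * (l - a)" using assms by (simp add: algebra_simps)
    hence "complex_of_real c * b + complex_of_real d * (l - a) = l * (l - a)"
      by (metis of_real_add of_real_mult of_real_diff)
    moreover have "?v \<noteq> 0" using False by (auto simp: vec_eq_iff forall_2)
    ultimately show ?thesis unfolding mat2_eig_iff
      by (intro exI[of _ ?v]) (simp add: algebra_simps)
  next
    case True
    show ?thesis
    proof (cases "l = d")
      case True
      let ?v = "vector [0, 1] :: complex^2"
      have "?v \<noteq> 0" by (auto simp: vec_eq_iff forall_2)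
      then show ?thesis unfolding mat2_eig_iff
        using True \<open>b = 0\<close> by (intro exI[of _ ?v]) simp
    next
      case False
      hence la: "l = a" using assms \<open>b = 0\<close> by simp
      let ?v = "vector [complex_of_real (l - d), complex_of_real c] :: complex^2"
      have "?v \<noteq> 0" using False by (auto simp: vec_eq_iff forall_2)
      then show ?thesis unfolding mat2_eig_iff
        using la \<open>b = 0\<close> by (intro exI[of _ ?v]) (simp add: algebra_simps)
    qed
  qed
  hence "cmod (complex_of_real l) \<in> {cmod z | z. \<exists>v :: complex^2. v \<noteq> 0 \<and>
        (\<chi> i j. complex_of_real (mat2 a b c d $ i $ j)) *v v = z *s v}" by blast
  hence "cmod (complex_of_real l) \<le> spectral_radius (mat2 a b c d)"
    unfolding spectral_radius_def using mat2_eig_finite by (intro Max_ge) auto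
  thus ?thesis by simp
qed

lemma perron2:
  fixes a b c d :: real
  assumes "a \<ge> 0" "b \<ge> 0" "c \<ge> 0" "d \<ge> 0" "spectral_radius (mat2 a b c d) < 1"
  shows "a < 1 \<and> d < 1 \<and> b * c < (1 - a) * (1 - d)"
proof -
  have D0: "0 \<le> (a - d)^2 + 4 * (b * c)" by (smt (verit) zero_le_power2 mult_nonneg_nonneg assms(2) assms(3))
  define s where "s = sqrt ((a - d)^2 + 4 * (b * c))"
  have s0: "s \<ge> 0" unfolding s_def using D0 by simp
  have ss: "s^2 = (a - d)^2 + 4 * (b * c)" unfolding s_def using D0 by simp
  have "sqrt ((a - d)^2) \<le> s" unfolding s_def
    by (rule real_sqrt_le_mono) (smt (verit) mult_nonneg_nonneg assms(2,3))
  hence sad: "s \<ge> \<bar>a - d\<bar>" by simp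
  define l where "l = (a + d + s) / 2"
  have "(l - a) * (l - d) = b * c" unfolding l_def using ss
    by (simp add: field_simps power2_eq_square) 
  from mat2_real_eig[OF this] assms(5) have l1: "\<bar>l\<bar> < 1" by simp
  define m where "m = (a + d - s) / 2"
  have "(1 - a) * (1 - d) - b * c = (1 - l) * (1 - m)" unfolding l_def m_def using ss
    by (simp add: field_simps power2_eq_square)
  moreover have "1 - l > 0" "1 - m > 0" using l1 s0 unfolding l_def m_def by auto
  ultimately have "(1 - a) * (1 - d) - b * c > 0" by simp
  moreover have "a < 1" "d < 1" using l1 sad unfolding l_def by auto
  ultimately show ?thesis by simp
qed



lemma mv_bound:
  fixes M :: "real^'a^'n"
  assumes "\<And>j. \<bar>v$j\<bar> \<le> r"
  shows "\<bar>(M *v v) $ i\<bar> \<le> (\<Sum>j\<in>UNIV. \<bar>r * M$i$j\<bar>)"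
proof -
  have "\<bar>(M *v v) $ i\<bar> = \<bar>\<Sum>j\<in>UNIV. M$i$j * v$j\<bar>" by (simp add: matrix_vector_mult_def)
  also have "\<dots> \<le> (\<Sum>j\<in>UNIV. \<bar>M$i$j * v$j\<bar>)" by (rule sum_abs)
  also have "\<dots> \<le> (\<Sum>j\<in>UNIV. \<bar>r * M$i$j\<bar>)"
  proof (rule sum_mono)
    fix j
    have "\<bar>v$j\<bar> \<le> \<bar>r\<bar>" using assms[of j] by linarith
    hence "\<bar>M$i$j\<bar> * \<bar>v$j\<bar> \<le> \<bar>M$i$j\<bar> * \<bar>r\<bar>" by (simp add: mult_left_mono)
    thus "\<bar>M$i$j * v$j\<bar> \<le> \<bar>r * M$i$j\<bar>" by (simp add: abs_mult mult.commute)
  qed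
  finally show ?thesis .
qed

lemma arg_bound:
  fixes W :: "real^'u^'n" and U :: "real^'x^'n" and b :: "real^'n"
  assumes "\<And>j. \<bar>u$j\<bar> \<le> umax" "\<And>j. \<bar>\<xi>$j\<bar> \<le> 1"
  shows "\<bar>(W *v u + U *v \<xi> + b) $ i\<bar> \<le> inf_norm_WUb W U b umax"
proof -
  have "\<bar>(W *v u + U *v \<xi> + b) $ i\<bar> \<le> \<bar>(W *v u)$i\<bar> + \<bar>(U *v \<xi>)$i\<bar> + \<bar>b$i\<bar>" by simp
  also have "\<dots> \<le> (\<Sum>j\<in>UNIV. \<bar>umax * W $ i $ j\<bar>) + (\<Sum>j\<in>UNIV. \<bar>U $ i $ j\<bar>) + \<bar>b $ i\<bar>"
    using mv_bound[of u umax W i, OF assms(1)] mv_bound[of \<xi> 1 U i, OF assms(2)] by simp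
  also have "\<dots> \<le> inf_norm_WUb W U b umax" unfolding inf_norm_WUb_def
    by (rule Max_ge) auto
  finally show ?thesis .
qed

lemma obs_arg_eq:
  fixes W :: "real^'u^'n" and U :: "real^'n^'n" and L :: "real^'y^'n" and C :: "real^'n^'y"
  shows "W *v u + U *v \<xi>h + b + L *v ((C *v \<xi> + b_y) - (C *v \<xi>h + b_y))
       = W *v u + (U - L ** C) *v \<xi>h + b + (L ** C) *v \<xi>"
  by (simp add: matrix_vector_mult_diff_distrib matrix_vector_mult_diff_rdistrib matrix_vector_mul_assoc)

lemma obs_arg_bound:
  fixes W :: "real^'u^'n" and U :: "real^'n^'n" and L :: "real^'y^'n" and C :: "real^'n^'y"
  assumes "\<And>j. \<bar>u$j\<bar> \<le> umax" "\<And>j. \<bar>\<xi>$j\<bar> \<le> 1" "\<And>j. \<bar>\<xi>h$j\<bar> \<le> 1"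
  shows "\<bar>(W *v u + U *v \<xi>h + b + L *v ((C *v \<xi> + b_y) - (C *v \<xi>h + b_y))) $ i\<bar>
           \<le> inf_norm_obs W U b L C umax"
proof -
  have "\<bar>(W *v u + (U - L ** C) *v \<xi>h + b + (L ** C) *v \<xi>) $ i\<bar>
     \<le> \<bar>(W *v u)$i\<bar> + \<bar>((U - L ** C) *v \<xi>h)$i\<bar> + \<bar>b$i\<bar> + \<bar>((L ** C) *v \<xi>)$i\<bar>" by simp
  also have "\<dots> \<le> (\<Sum>j\<in>UNIV. \<bar>umax * W $ i $ j\<bar>) + (\<Sum>j\<in>UNIV. \<bar>(U - L ** C) $ i $ j\<bar>)
                     + \<bar>b $ i\<bar> + (\<Sum>j\<in>UNIV. \<bar>(L ** C) $ i $ j\<bar>)"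
    using mv_bound[of u umax W i, OF assms(1)] mv_bound[of \<xi>h 1 "U - L ** C" i, OF assms(3)]
      mv_bound[of \<xi> 1 "L ** C" i, OF assms(2)] by simp
  also have "\<dots> \<le> inf_norm_obs W U b L C umax" unfolding inf_norm_obs_def
    by (rule Max_ge) auto
  finally show ?thesis unfolding obs_arg_eq .
qed

lemma sig_le_abs: "sigmoid t \<le> sigmoid \<bar>t\<bar>" by (rule sigmoid_mono) simp

lemma gate_bound:
  fixes W :: "real^'u^'n" and U :: "real^'n^'n" and b :: "real^'n"
  assumes "\<And>j. \<bar>u$j\<bar> \<le> umax" "\<And>j. \<bar>\<xi>$j\<bar> \<le> 1"
  shows "\<bar>vmap sigmoid (W *v u + U *v \<xi> + b) $ i\<bar> \<le> sig_bar W U b umax"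
proof -
  let ?t = "(W *v u + U *v \<xi> + b)$i"
  have "sigmoid ?t \<le> sig_bar W U b umax"
    using order_trans[OF sig_le_abs sigmoid_mono[OF arg_bound[OF assms, of W U b i]]]
    unfolding sig_bar_def .
  thus ?thesis using sigmoid_pos[of ?t] by (simp add: vmap_def)
qed

lemma tanh_gate_bound:
  fixes W :: "real^'u^'n" and U :: "real^'n^'n" and b :: "real^'n"
  assumes "\<And>j. \<bar>u$j\<bar> \<le> umax" "\<And>j. \<bar>\<xi>$j\<bar> \<le> 1"
  shows "\<bar>vmap tanh (W *v u + U *v \<xi> + b) $ i\<bar> \<le> tanh_bar W U b umax"
  using arg_bound[OF assms, of W U b i]
  unfolding vmap_def tanh_bar_def by (simp flip: tanh_real_abs)

lemma obs_gate_bound: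
  fixes W :: "real^'u^'n" and U :: "real^'n^'n" and L :: "real^'y^'n" and C :: "real^'n^'y"
  assumes "\<And>j. \<bar>u$j\<bar> \<le> umax" "\<And>j. \<bar>\<xi>$j\<bar> \<le> 1" "\<And>j. \<bar>\<xi>h$j\<bar> \<le> 1"
  shows "\<bar>vmap sigmoid (W *v u + U *v \<xi>h + b + L *v ((C *v \<xi> + b_y) - (C *v \<xi>h + b_y))) $ i\<bar>
           \<le> sig_hat W U b L C umax"
proof -
  let ?t = "(W *v u + U *v \<xi>h + b + L *v ((C *v \<xi> + b_y) - (C *v \<xi>h + b_y)))$i"
  have "sigmoid ?t \<le> sig_hat W U b L C umax"
    using order_trans[OF sig_le_abs sigmoid_mono[OF obs_arg_bound[OF assms, of W U b L C b_y i]]]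
    unfolding sig_hat_def .
  thus ?thesis using sigmoid_pos[of ?t] by (simp only: vmap_def vec_lambda_beta abs_of_pos)
qed



lemma arg_diff:
  fixes W :: "real^'u^'n" and U :: "real^'n^'n" and L :: "real^'y^'n" and C :: "real^'n^'y"
  shows "(W *v u + U *v \<xi>h + b + L *v ((C *v \<xi> + b_y) - (C *v \<xi>h + b_y))) - (W *v u + U *v \<xi> + b)
       = (U - L ** C) *v (\<xi>h - \<xi>)"
  unfolding obs_arg_eq by (simp add: matrix_vector_mult_diff_distrib matrix_vector_mult_diff_rdistrib algebra_simps)

lemma sig_gate_diff: "\<bar>vmap sigmoid A $ i - vmap sigmoid B $ i\<bar> \<le> 1/4 * \<bar>(A - B)$i\<bar>"
  unfolding vmap_def using sigmoid_lip by simp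

lemma tanh_gate_diff: "\<bar>vmap tanh A $ i - vmap tanh B $ i\<bar> \<le> \<bar>(A - B)$i\<bar>"
  unfolding vmap_def using tanh_lip by simp

lemma step:
  fixes Wf Wi Wc Wo :: "real^'u^'x" and Uf Ui Uc Uo :: "real^'x^'x"
    and bf bi bc bo :: "real^'x" and C :: "real^'x^'y" and b_y :: "real^'y"
    and Lf Li Lo :: "real^'y^'x" and uk :: "real^'u" and xk \<xi>k xhk \<xi>hk :: "real^'x"
  assumes u: "\<And>j. \<bar>uk$j\<bar> \<le> umax" and \<xi>: "\<And>j. \<bar>\<xi>k$j\<bar> \<le> 1" and \<xi>h: "\<And>j. \<bar>\<xi>hk$j\<bar> \<le> 1"
    and xb: "\<And>j. \<bar>xk$j\<bar> \<le> X"
    and X: "X = sig_bar Wi Ui bi umax * tanh_bar Wc Uc bc umax / (1 - sig_bar Wf Uf bf umax)"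
  defines "F \<equiv> vmap sigmoid (Wf *v uk + Uf *v \<xi>k + bf)"
    and "I \<equiv> vmap sigmoid (Wi *v uk + Ui *v \<xi>k + bi)"
    and "G \<equiv> vmap tanh (Wc *v uk + Uc *v \<xi>k + bc)"
    and "Pg \<equiv> vmap sigmoid (Wo *v uk + Uo *v \<xi>k + bo)"
    and "Fh \<equiv> vmap sigmoid (Wf *v uk + Uf *v \<xi>hk + bf + Lf *v ((C *v \<xi>k + b_y) - (C *v \<xi>hk + b_y)))"
    and "Ih \<equiv> vmap sigmoid (Wi *v uk + Ui *v \<xi>hk + bi + Li *v ((C *v \<xi>k + b_y) - (C *v \<xi>hk + b_y)))"
    and "Gh \<equiv> vmap tanh (Wc *v uk + Uc *v \<xi>hk + bc)"
    and "Pgh \<equiv> vmap sigmoid (Wo *v uk + Uo *v \<xi>hk + bo + Lo *v ((C *v \<xi>k + b_y) - (C *v \<xi>hk + b_y)))"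
  shows "\<bar>(F \<circ>\<^sub>h xk + I \<circ>\<^sub>h G) $ j\<bar> \<le> X"
    and "\<bar>(Pg \<circ>\<^sub>h vmap tanh (F \<circ>\<^sub>h xk + I \<circ>\<^sub>h G)) $ j\<bar> \<le> 1"
    and "\<bar>(Pgh \<circ>\<^sub>h vmap tanh (Fh \<circ>\<^sub>h xhk + Ih \<circ>\<^sub>h Gh)) $ j\<bar> \<le> 1"
    and "norm ((Fh \<circ>\<^sub>h xhk + Ih \<circ>\<^sub>h Gh) - (F \<circ>\<^sub>h xk + I \<circ>\<^sub>h G))
          \<le> sig_hat Wf Uf bf Lf C umax * norm (xhk - xk)
            + (1/4 * opnorm2 (Uf - Lf ** C) * X + sig_bar Wi Ui bi umax * opnorm2 Uc
               + 1/4 * opnorm2 (Ui - Li ** C) * tanh_bar Wc Uc bc umax) * norm (\<xi>hk - \<xi>k)"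
    and "norm ((Pgh \<circ>\<^sub>h vmap tanh (Fh \<circ>\<^sub>h xhk + Ih \<circ>\<^sub>h Gh)) - (Pg \<circ>\<^sub>h vmap tanh (F \<circ>\<^sub>h xk + I \<circ>\<^sub>h G)))
          \<le> sig_hat Wo Uo bo Lo C umax * norm ((Fh \<circ>\<^sub>h xhk + Ih \<circ>\<^sub>h Gh) - (F \<circ>\<^sub>h xk + I \<circ>\<^sub>h G))
            + 1/4 * tanh X * opnorm2 (Uo - Lo ** C) * norm (\<xi>hk - \<xi>k)"
proof -
  define sf where "sf = sig_bar Wf Uf bf umax"
  define si where "si = sig_bar Wi Ui bi umax"
  define sc where "sc = tanh_bar Wc Uc bc umax"
  define hf where "hf = sig_hat Wf Uf bf Lf C umax"
  define ho where "ho = sig_hat Wo Uo bo Lo C umax"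
  define e where "e = \<xi>hk - \<xi>k"
  have Fb: "\<bar>F$i\<bar> \<le> sf" for i unfolding F_def sf_def by (rule gate_bound[OF u \<xi>])
  have Ib: "\<bar>I$i\<bar> \<le> si" for i unfolding I_def si_def by (rule gate_bound[OF u \<xi>])
  have Gb: "\<bar>G$i\<bar> \<le> sc" for i unfolding G_def sc_def by (rule tanh_gate_bound[OF u \<xi>])
  have Ghb: "\<bar>Gh$i\<bar> \<le> sc" for i unfolding Gh_def sc_def by (rule tanh_gate_bound[OF u \<xi>h])
  have Fhb: "\<bar>Fh$i\<bar> \<le> hf" for i unfolding Fh_def hf_def by (rule obs_gate_bound[OF u \<xi> \<xi>h])
  have PghB: "\<bar>Pgh$i\<bar> \<le> ho" for i unfolding Pgh_def ho_def by (rule obs_gate_bound[OF u \<xi> \<xi>h])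
  have sf1: "sf < 1" unfolding sf_def sig_bar_def by (rule sigmoid_lt1)
  have X0: "X \<ge> 0" using xb[of undefined] by linarith
  have sf0: "sf \<ge> 0" using Fb[of undefined] by linarith
  have si0: "si \<ge> 0" using Ib[of undefined] by linarith
  have sc0: "sc \<ge> 0" using Gb[of undefined] by linarith
  have hf0: "hf \<ge> 0" using Fhb[of undefined] by linarith
  have ho0: "ho \<ge> 0" using PghB[of undefined] by linarith
  have XX: "sf * X + si * sc = X" unfolding X si_def sc_def sf_def[symmetric] using sf1
    by (simp add: field_simps)
  show xb1: "\<bar>(F \<circ>\<^sub>h xk + I \<circ>\<^sub>h G) $ j\<bar> \<le> X" for j
  proof -
    have "\<bar>(F \<circ>\<^sub>h xk + I \<circ>\<^sub>h G) $ j\<bar> \<le> \<bar>F$j\<bar> * \<bar>xk$j\<bar> + \<bar>I$j\<bar> * \<bar>G$j\<bar>"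
      by (simp add: hadamard_def abs_mult[symmetric] abs_triangle_ineq)
    also have "\<dots> \<le> sf * X + si * sc"
      by (intro add_mono mult_mono Fb xb Ib Gb) (use si0 X0 sf0 in auto)
    finally show ?thesis using XX by simp
  qed
  have tb: "\<bar>tanh a\<bar> < 1" for a :: real using tanh_real_bounds[of a] by auto
  have sb: "\<bar>sigmoid a\<bar> < 1" for a using sigmoid_pos[of a] sigmoid_lt1[of a] by auto
  show "\<bar>(Pg \<circ>\<^sub>h vmap tanh (F \<circ>\<^sub>h xk + I \<circ>\<^sub>h G)) $ j\<bar> \<le> 1"
    unfolding Pg_def hadamard_def vmap_def using tb sb
    by (simp add: abs_mult) (meson abs_ge_zero less_imp_le mult_le_one)
  show "\<bar>(Pgh \<circ>\<^sub>h vmap tanh (Fh \<circ>\<^sub>h xhk + Ih \<circ>\<^sub>h Gh)) $ j\<bar> \<le> 1"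
    unfolding Pgh_def hadamard_def vmap_def using tb sb
    by (simp add: abs_mult) (meson abs_ge_zero less_imp_le mult_le_one)
  have dec: "(Fh \<circ>\<^sub>h xhk + Ih \<circ>\<^sub>h Gh) - (F \<circ>\<^sub>h xk + I \<circ>\<^sub>h G)
     = Fh \<circ>\<^sub>h (xhk - xk) + (Fh - F) \<circ>\<^sub>h xk + I \<circ>\<^sub>h (Gh - G) + (Ih - I) \<circ>\<^sub>h Gh"
    by (simp add: vec_eq_iff hadamard_def algebra_simps)
  have n1: "norm (Fh \<circ>\<^sub>h (xhk - xk)) \<le> hf * norm (xhk - xk)"
    by (rule norm_entry_bound[OF _ hf0]) (simp add: hadamard_def abs_mult mult_right_mono Fhb)
  have n2: "norm ((Fh - F) \<circ>\<^sub>h xk) \<le> (X / 4) * norm ((Uf - Lf ** C) *v e)"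
  proof (rule norm_entry_bound)
    fix i
    have "\<bar>Fh$i - F$i\<bar> \<le> 1/4 * \<bar>((Uf - Lf ** C) *v e) $ i\<bar>"
      using sig_gate_diff[of "Wf *v uk + Uf *v \<xi>hk + bf + Lf *v ((C *v \<xi>k + b_y) - (C *v \<xi>hk + b_y))"
          i "Wf *v uk + Uf *v \<xi>k + bf"]
      unfolding arg_diff Fh_def F_def e_def .
    hence "\<bar>Fh$i - F$i\<bar> * \<bar>xk$i\<bar> \<le> 1/4 * \<bar>((Uf - Lf ** C) *v e) $ i\<bar> * X"
      by (intro mult_mono xb) auto
    thus "\<bar>((Fh - F) \<circ>\<^sub>h xk) $ i\<bar> \<le> X / 4 * \<bar>((Uf - Lf ** C) *v e) $ i\<bar>"
      by (simp add: hadamard_def abs_mult) (metis mult.commute)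
  qed (use X0 in simp)
  have n3: "norm (I \<circ>\<^sub>h (Gh - G)) \<le> si * norm (Uc *v e)"
  proof (rule norm_entry_bound[OF _ si0])
    fix i
    have "\<bar>Gh$i - G$i\<bar> \<le> \<bar>(Uc *v e) $ i\<bar>"
      using tanh_gate_diff[of "Wc *v uk + Uc *v \<xi>hk + bc" i "Wc *v uk + Uc *v \<xi>k + bc"]
      unfolding Gh_def G_def e_def by (simp add: matrix_vector_mult_diff_distrib)
    hence "\<bar>I$i\<bar> * \<bar>Gh$i - G$i\<bar> \<le> si * \<bar>(Uc *v e) $ i\<bar>"
      by (intro mult_mono Ib) (auto simp: si0)
    thus "\<bar>(I \<circ>\<^sub>h (Gh - G)) $ i\<bar> \<le> si * \<bar>(Uc *v e) $ i\<bar>"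
      by (simp add: hadamard_def abs_mult)
  qed
  have n4: "norm ((Ih - I) \<circ>\<^sub>h Gh) \<le> (sc / 4) * norm ((Ui - Li ** C) *v e)"
  proof (rule norm_entry_bound)
    fix i
    have "\<bar>Ih$i - I$i\<bar> \<le> 1/4 * \<bar>((Ui - Li ** C) *v e) $ i\<bar>"
      using sig_gate_diff[of "Wi *v uk + Ui *v \<xi>hk + bi + Li *v ((C *v \<xi>k + b_y) - (C *v \<xi>hk + b_y))"
          i "Wi *v uk + Ui *v \<xi>k + bi"]
      unfolding arg_diff Ih_def I_def e_def .
    hence "\<bar>Ih$i - I$i\<bar> * \<bar>Gh$i\<bar> \<le> 1/4 * \<bar>((Ui - Li ** C) *v e) $ i\<bar> * sc"
      by (intro mult_mono Ghb) auto
    thus "\<bar>((Ih - I) \<circ>\<^sub>h Gh) $ i\<bar> \<le> sc / 4 * \<bar>((Ui - Li ** C) *v e) $ i\<bar>"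
      by (simp add: hadamard_def abs_mult) (metis mult.commute)
  qed (use sc0 in simp)
  have "norm ((Fh \<circ>\<^sub>h xhk + Ih \<circ>\<^sub>h Gh) - (F \<circ>\<^sub>h xk + I \<circ>\<^sub>h G))
     \<le> norm (Fh \<circ>\<^sub>h (xhk - xk)) + norm ((Fh - F) \<circ>\<^sub>h xk) + norm (I \<circ>\<^sub>h (Gh - G)) + norm ((Ih - I) \<circ>\<^sub>h Gh)"
    unfolding dec by (meson add_mono norm_triangle_ineq order_trans order_refl)
  also have "\<dots> \<le> hf * norm (xhk - xk) + (X / 4) * (opnorm2 (Uf - Lf ** C) * norm e)
      + si * (opnorm2 Uc * norm e) + (sc / 4) * (opnorm2 (Ui - Li ** C) * norm e)"
    using n1 n2 n3 n4 opnorm2[of "Uf - Lf ** C" e] opnorm2[of Uc e] opnorm2[of "Ui - Li ** C" e]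
      X0 si0 sc0
    by (smt (verit, best) mult_left_mono divide_nonneg_pos)
  finally show "norm ((Fh \<circ>\<^sub>h xhk + Ih \<circ>\<^sub>h Gh) - (F \<circ>\<^sub>h xk + I \<circ>\<^sub>h G))
          \<le> sig_hat Wf Uf bf Lf C umax * norm (xhk - xk)
            + (1/4 * opnorm2 (Uf - Lf ** C) * X + sig_bar Wi Ui bi umax * opnorm2 Uc
               + 1/4 * opnorm2 (Ui - Li ** C) * tanh_bar Wc Uc bc umax) * norm (\<xi>hk - \<xi>k)"
    unfolding hf_def[symmetric] si_def[symmetric] sc_def[symmetric] e_def[symmetric]
    by (simp add: algebra_simps)
  define x1 where "x1 = F \<circ>\<^sub>h xk + I \<circ>\<^sub>h G"
  define xh1 where "xh1 = Fh \<circ>\<^sub>h xhk + Ih \<circ>\<^sub>h Gh"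
  have dec2: "Pgh \<circ>\<^sub>h vmap tanh xh1 - Pg \<circ>\<^sub>h vmap tanh x1
     = Pgh \<circ>\<^sub>h (vmap tanh xh1 - vmap tanh x1) + (Pgh - Pg) \<circ>\<^sub>h vmap tanh x1"
    by (simp add: vec_eq_iff hadamard_def algebra_simps)
  have m1: "norm (Pgh \<circ>\<^sub>h (vmap tanh xh1 - vmap tanh x1)) \<le> ho * norm (xh1 - x1)"
  proof (rule norm_entry_bound[OF _ ho0])
    fix i
    have "\<bar>Pgh$i\<bar> * \<bar>vmap tanh xh1 $ i - vmap tanh x1 $ i\<bar> \<le> ho * \<bar>(xh1 - x1)$i\<bar>"
      by (intro mult_mono PghB tanh_gate_diff) (auto simp: ho0)
    thus "\<bar>(Pgh \<circ>\<^sub>h (vmap tanh xh1 - vmap tanh x1)) $ i\<bar> \<le> ho * \<bar>(xh1 - x1)$i\<bar>"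
      by (simp add: hadamard_def abs_mult)
  qed
  have m2: "norm ((Pgh - Pg) \<circ>\<^sub>h vmap tanh x1) \<le> (tanh X / 4) * norm ((Uo - Lo ** C) *v e)"
  proof (rule norm_entry_bound)
    fix i
    have "\<bar>Pgh$i - Pg$i\<bar> \<le> 1/4 * \<bar>((Uo - Lo ** C) *v e) $ i\<bar>"
      using sig_gate_diff[of "Wo *v uk + Uo *v \<xi>hk + bo + Lo *v ((C *v \<xi>k + b_y) - (C *v \<xi>hk + b_y))"
          i "Wo *v uk + Uo *v \<xi>k + bo"]
      unfolding arg_diff Pgh_def Pg_def e_def .
    moreover have "\<bar>vmap tanh x1 $ i\<bar> \<le> tanh X"
      using xb1[of i] unfolding x1_def[symmetric] vmap_def by (simp flip: tanh_real_abs)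
    ultimately have "\<bar>Pgh$i - Pg$i\<bar> * \<bar>vmap tanh x1 $ i\<bar> \<le> 1/4 * \<bar>((Uo - Lo ** C) *v e) $ i\<bar> * tanh X"
      by (intro mult_mono) auto
    thus "\<bar>((Pgh - Pg) \<circ>\<^sub>h vmap tanh x1) $ i\<bar> \<le> tanh X / 4 * \<bar>((Uo - Lo ** C) *v e) $ i\<bar>"
      by (simp add: hadamard_def abs_mult) (metis mult.commute)
  qed (use X0 in simp)
  have "norm (Pgh \<circ>\<^sub>h vmap tanh xh1 - Pg \<circ>\<^sub>h vmap tanh x1)
     \<le> norm (Pgh \<circ>\<^sub>h (vmap tanh xh1 - vmap tanh x1)) + norm ((Pgh - Pg) \<circ>\<^sub>h vmap tanh x1)"
    unfolding dec2 by (rule norm_triangle_ineq)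
  also have "\<dots> \<le> ho * norm (xh1 - x1) + (tanh X / 4) * (opnorm2 (Uo - Lo ** C) * norm e)"
    using m1 m2 opnorm2[of "Uo - Lo ** C" e] X0
    by (smt (verit, best) mult_left_mono divide_nonneg_pos tanh_real_nonneg_iff)
  finally show "norm ((Pgh \<circ>\<^sub>h vmap tanh (Fh \<circ>\<^sub>h xhk + Ih \<circ>\<^sub>h Gh)) - (Pg \<circ>\<^sub>h vmap tanh (F \<circ>\<^sub>h xk + I \<circ>\<^sub>h G)))
          \<le> sig_hat Wo Uo bo Lo C umax * norm ((Fh \<circ>\<^sub>h xhk + Ih \<circ>\<^sub>h Gh) - (F \<circ>\<^sub>h xk + I \<circ>\<^sub>h G))
            + 1/4 * tanh X * opnorm2 (Uo - Lo ** C) * norm (\<xi>hk - \<xi>k)"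
    unfolding x1_def[symmetric] xh1_def[symmetric] ho_def[symmetric] e_def[symmetric]
    by (simp add: algebra_simps)
qed



lemma conv2:
  fixes Ex Ez :: "nat \<Rightarrow> real" and a b h d0 :: real
  assumes nn: "\<And>k. Ex k \<ge> 0" "\<And>k. Ez k \<ge> 0"
    and s1: "\<And>k. Ex (Suc k) \<le> a * Ex k + b * Ez k"
    and s2: "\<And>k. Ez (Suc k) \<le> h * Ex (Suc k) + d0 * Ez k"
    and pos: "a \<ge> 0" "b \<ge> 0" "h \<ge> 0" "d0 \<ge> 0"
    and p: "a < 1" "d0 + h * b < 1" "b * (a * h) < (1 - a) * (1 - (d0 + h * b))"
  shows "Ex \<longlonglongrightarrow> 0 \<and> Ez \<longlonglongrightarrow> 0"
proof -
  define c where "c = a * h"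
  define d where "d = d0 + h * b"
  have c0: "c \<ge> 0" "d \<ge> 0" unfolding c_def d_def using pos by auto
  have s2': "Ez (Suc k) \<le> c * Ex k + d * Ez k" for k
  proof -
    have "h * Ex (Suc k) \<le> h * (a * Ex k + b * Ez k)" by (rule mult_left_mono[OF s1 pos(3)])
    thus ?thesis using s2[of k] unfolding c_def d_def by (simp add: algebra_simps)
  qed
  define D where "D = (1 - a) * (1 - d) - b * c"
  have D0: "D > 0" using p(3) unfolding D_def c_def d_def by simp
  define \<epsilon> where "\<epsilon> = D / (2 * (c + 1))"
  have e0: "\<epsilon> > 0" unfolding \<epsilon>_def using D0 c0 by simp
  have ec: "\<epsilon> * c < D"
  proof -
    have "\<epsilon> * c = D * (c / (2 * (c + 1)))" unfolding \<epsilon>_def by simp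
    also have "\<dots> < D * 1" using D0 c0 by (intro mult_strict_left_mono) (auto simp: field_simps)
    finally show ?thesis by simp
  qed
  have d1: "1 - d > 0" using p(2) unfolding d_def by simp
  define t where "t = (b + \<epsilon>) / (1 - d)"
  have t0: "t > 0" unfolding t_def using d1 e0 pos by simp
  have q1: "a + t * c < 1"
  proof -
    have "t * c * (1 - d) = (b + \<epsilon>) * c" unfolding t_def using d1 by simp
    also have "\<dots> < (1 - a) * (1 - d)" using ec unfolding D_def by (simp add: algebra_simps)
    finally have "t * c < 1 - a" using d1 by (simp add: mult_less_cancel_right)
    thus ?thesis by simp
  qed
  have q2: "(b + t * d) / t < 1"
  proof -
    have "t * (1 - d) = b + \<epsilon>" unfolding t_def using d1 by simp
    hence "b + t * d < t" using e0 by (simp add: algebra_simps)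
    thus ?thesis using t0 by simp
  qed
  define q where "q = max (a + t * c) ((b + t * d) / t)"
  have "0 \<le> a + t * c" using pos c0 t0 by simp
  hence q: "q < 1" "q \<ge> 0" unfolding q_def using q1 q2 by (auto simp: le_max_iff_disj)
  define V where "V k = Ex k + t * Ez k" for k
  have V0: "V k \<ge> 0" for k unfolding V_def using nn t0 by simp
  have Vs: "V (Suc k) \<le> q * V k" for k
  proof -
    have "V (Suc k) \<le> (a * Ex k + b * Ez k) + t * (c * Ex k + d * Ez k)"
    proof -
      have "t * Ez (Suc k) \<le> t * (c * Ex k + d * Ez k)"
        by (rule mult_left_mono[OF s2'[of k]]) (use t0 in simp)
      thus ?thesis unfolding V_def using s1[of k] by simp
    qed
    also have "\<dots> = (a + t * c) * Ex k + ((b + t * d) / t) * t * Ez k"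
      using t0 by (simp add: field_simps)
    also have "\<dots> \<le> q * Ex k + q * t * Ez k"
      unfolding q_def using nn t0
      by (intro add_mono mult_right_mono) auto
    finally show ?thesis unfolding V_def by (simp add: algebra_simps)
  qed
  have Vk: "V k \<le> q ^ k * V 0" for k
  proof (induction k)
    case (Suc k)
    have "V (Suc k) \<le> q * V k" by (rule Vs)
    also have "\<dots> \<le> q * (q ^ k * V 0)" by (rule mult_left_mono[OF Suc q(2)])
    finally show ?case by simp
  qed simp
  have lim: "(\<lambda>k. q ^ k * V 0) \<longlonglongrightarrow> 0"
    using LIMSEQ_power_zero[of q] q by (intro tendsto_mult_left_zero) auto
  have "Ex \<longlonglongrightarrow> 0"
  proof (rule Lim_null_comparison[OF _ lim])
    show "\<forall>\<^sub>F k in sequentially. norm (Ex k) \<le> q ^ k * V 0"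
    proof (intro always_eventually allI)
      fix k
      have "t * Ez k \<ge> 0" using nn t0 by simp
      thus "norm (Ex k) \<le> q ^ k * V 0" using Vk[of k] nn(1)[of k] unfolding V_def by simp
    qed
  qed
  moreover have "Ez \<longlonglongrightarrow> 0"
  proof (rule Lim_null_comparison[OF _ tendsto_mult_right_zero[OF lim, of "1/t"]])
    show "\<forall>\<^sub>F k in sequentially. norm (Ez k) \<le> 1/t * (q ^ k * V 0)"
    proof (intro always_eventually allI)
      fix k
      have "t * Ez k \<le> q ^ k * V 0" using Vk[of k] nn(1)[of k] unfolding V_def by simp
      thus "norm (Ez k) \<le> 1/t * (q ^ k * V 0)" using t0 nn by (simp add: field_simps)
    qed
  qed
  ultimately show ?thesis ..
qed


lemma inf_norm_nonneg: "inf_norm_WUb W U b umax \<ge> 0"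
proof -
  have "0 \<le> (\<lambda>i. (\<Sum>j\<in>UNIV. \<bar>umax * W $ i $ j\<bar>) + (\<Sum>j\<in>UNIV. \<bar>U $ i $ j\<bar>) + \<bar>b $ i\<bar>) undefined"
    by (simp add: sum_nonneg)
  also have "\<dots> \<le> inf_norm_WUb W U b umax" unfolding inf_norm_WUb_def by (rule Max_ge) auto
  finally show ?thesis .
qed

theorem theorem3:
  fixes Wf Wi Wc Wo :: "real^'u^'x"
    and Uf Ui Uc Uo :: "real^'x^'x"
    and bf bi bc bo :: "real^'x"
    and C :: "real^'x^'y" and b_y :: "real^'y"
    and Lf Li Lo :: "real^'y^'x"
    and umax :: real
    and u :: "nat \<Rightarrow> real^'u"
    and x \<xi> xh \<xi>h :: "nat \<Rightarrow> real^'x"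
  assumes umax: "umax \<ge> 0"
    and input: "\<forall>k i. \<bar>u k $ i\<bar> \<le> umax"
    and plant_x: "\<forall>k. x (Suc k) =
         vmap sigmoid (Wf *v u k + Uf *v \<xi> k + bf) \<circ>\<^sub>h x k
       + vmap sigmoid (Wi *v u k + Ui *v \<xi> k + bi) \<circ>\<^sub>h vmap tanh (Wc *v u k + Uc *v \<xi> k + bc)"
    and plant_xi: "\<forall>k. \<xi> (Suc k) =
         vmap sigmoid (Wo *v u k + Uo *v \<xi> k + bo) \<circ>\<^sub>h vmap tanh (x (Suc k))"
    and obs_x: "\<forall>k. xh (Suc k) =
         vmap sigmoid (Wf *v u k + Uf *v \<xi>h k + bf
                       + Lf *v ((C *v \<xi> k + b_y) - (C *v \<xi>h k + b_y))) \<circ>\<^sub>h xh k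
       + vmap sigmoid (Wi *v u k + Ui *v \<xi>h k + bi
                       + Li *v ((C *v \<xi> k + b_y) - (C *v \<xi>h k + b_y)))
           \<circ>\<^sub>h vmap tanh (Wc *v u k + Uc *v \<xi>h k + bc)"
    and obs_xi: "\<forall>k. \<xi>h (Suc k) =
         vmap sigmoid (Wo *v u k + Uo *v \<xi>h k + bo
                       + Lo *v ((C *v \<xi> k + b_y) - (C *v \<xi>h k + b_y))) \<circ>\<^sub>h vmap tanh (xh (Suc k))"
    and init_xi: "\<forall>j. \<bar>\<xi> 0 $ j\<bar> < 1"
    and init_xih: "\<forall>j. \<bar>\<xi>h 0 $ j\<bar> < 1"
    and init_x: "\<forall>j. \<bar>x 0 $ j\<bar> \<le>
         sig_bar Wi Ui bi umax * tanh_bar Wc Uc bc umax / (1 - sig_bar Wf Uf bf umax)"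
    and init_xh: "\<forall>j. \<bar>xh 0 $ j\<bar> \<le>
         sig_hat Wi Ui bi Li C umax * tanh_bar Wc Uc bc umax / (1 - sig_hat Wf Uf bf Lf C umax)"
    and rho_delta: "let sf = sig_bar Wf Uf bf umax; si = sig_bar Wi Ui bi umax;
                        so = sig_bar Wo Uo bo umax; sc = tanh_bar Wc Uc bc umax;
                        sx = tanh (si * sc / (1 - sf));
                        \<alpha> = 1/4 * opnorm2 Uf * (si * sc / (1 - sf)) + si * opnorm2 Uc
                            + 1/4 * opnorm2 Ui * sc
                    in spectral_radius (mat2 sf \<alpha> (so * sf) (\<alpha> * so + 1/4 * sx * opnorm2 Uo)) < 1"
    and rho_hat: "let sf = sig_bar Wf Uf bf umax; si = sig_bar Wi Ui bi umax;
                      sc = tanh_bar Wc Uc bc umax;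
                      sx = tanh (si * sc / (1 - sf));
                      hf = sig_hat Wf Uf bf Lf C umax; ho = sig_hat Wo Uo bo Lo C umax;
                      h\<alpha> = 1/4 * opnorm2 (Uf - Lf ** C) * (si * sc / (1 - sf)) + si * opnorm2 Uc
                            + 1/4 * opnorm2 (Ui - Li ** C) * sc
                  in spectral_radius (mat2 hf h\<alpha> (hf * ho) (1/4 * sx * opnorm2 (Uo - Lo ** C) + ho * h\<alpha>)) < 1"
  shows "(\<lambda>k. xh k - x k) \<longlonglongrightarrow> 0 \<and> (\<lambda>k. \<xi>h k - \<xi> k) \<longlonglongrightarrow> 0"
proof -
  define sf where "sf = sig_bar Wf Uf bf umax"
  define si where "si = sig_bar Wi Ui bi umax"
  define sc where "sc = tanh_bar Wc Uc bc umax"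
  define X where "X = si * sc / (1 - sf)"
  define hf where "hf = sig_hat Wf Uf bf Lf C umax"
  define ho where "ho = sig_hat Wo Uo bo Lo C umax"
  define ha where "ha = 1/4 * opnorm2 (Uf - Lf ** C) * X + si * opnorm2 Uc + 1/4 * opnorm2 (Ui - Li ** C) * sc"
  define d0 where "d0 = 1/4 * tanh X * opnorm2 (Uo - Lo ** C)"
  have uk: "\<And>j. \<bar>u k $ j\<bar> \<le> umax" for k using input by auto
  have inv: "(\<forall>j. \<bar>\<xi> k $ j\<bar> \<le> 1) \<and> (\<forall>j. \<bar>\<xi>h k $ j\<bar> \<le> 1) \<and> (\<forall>j. \<bar>x k $ j\<bar> \<le> X)" for k
  proof (induction k)
    case 0
    show ?case using init_xi init_xih init_x unfolding X_def si_def sc_def sf_def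
      by (auto simp: less_imp_le)
  next
    case (Suc k)
    then have h: "\<And>j. \<bar>\<xi> k $ j\<bar> \<le> 1" "\<And>j. \<bar>\<xi>h k $ j\<bar> \<le> 1" "\<And>j. \<bar>x k $ j\<bar> \<le> X" by auto
    show ?case
      unfolding plant_xi[rule_format] obs_xi[rule_format] plant_x[rule_format] obs_x[rule_format]
    proof (intro conjI allI)
      fix j
      show "\<bar>(vmap sigmoid (Wo *v u k + Uo *v \<xi> k + bo) \<circ>\<^sub>h vmap tanh (vmap sigmoid (Wf *v u k + Uf *v \<xi> k + bf) \<circ>\<^sub>h x k +
          vmap sigmoid (Wi *v u k + Ui *v \<xi> k + bi) \<circ>\<^sub>h vmap tanh (Wc *v u k + Uc *v \<xi> k + bc))) $ j\<bar> \<le> 1"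
        by (rule step(2)[OF uk[of k] h(1) h(2) h(3) X_def[unfolded si_def sc_def sf_def]])
      show "\<bar>(vmap sigmoid (Wo *v u k + Uo *v \<xi>h k + bo + Lo *v (C *v \<xi> k + b_y - (C *v \<xi>h k + b_y))) \<circ>\<^sub>h
          vmap tanh (vmap sigmoid (Wf *v u k + Uf *v \<xi>h k + bf + Lf *v (C *v \<xi> k + b_y - (C *v \<xi>h k + b_y))) \<circ>\<^sub>h xh k +
             vmap sigmoid (Wi *v u k + Ui *v \<xi>h k + bi + Li *v (C *v \<xi> k + b_y - (C *v \<xi>h k + b_y))) \<circ>\<^sub>h
             vmap tanh (Wc *v u k + Uc *v \<xi>h k + bc))) $ j\<bar> \<le> 1"
        by (rule step(3)[OF uk[of k] h(1) h(2) h(3) X_def[unfolded si_def sc_def sf_def]])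
      show "\<bar>(vmap sigmoid (Wf *v u k + Uf *v \<xi> k + bf) \<circ>\<^sub>h x k +
          vmap sigmoid (Wi *v u k + Ui *v \<xi> k + bi) \<circ>\<^sub>h vmap tanh (Wc *v u k + Uc *v \<xi> k + bc)) $ j\<bar> \<le> X"
        by (rule step(1)[OF uk[of k] h(1) h(2) h(3) X_def[unfolded si_def sc_def sf_def]])
    qed
  qed
  define Ex where "Ex k = norm (xh k - x k)" for k
  define Ez where "Ez k = norm (\<xi>h k - \<xi> k)" for k
  have s1: "Ex (Suc k) \<le> hf * Ex k + ha * Ez k" for k
  proof -
    have h: "\<And>j. \<bar>\<xi> k $ j\<bar> \<le> 1" "\<And>j. \<bar>\<xi>h k $ j\<bar> \<le> 1" "\<And>j. \<bar>x k $ j\<bar> \<le> X" using inv[of k] by auto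
    show ?thesis unfolding Ex_def Ez_def plant_x[rule_format] obs_x[rule_format] hf_def ha_def si_def sc_def
      by (rule step(4)[OF uk[of k] h(1) h(2) h(3) X_def[unfolded si_def sc_def sf_def]])
  qed
  have s2: "Ez (Suc k) \<le> ho * Ex (Suc k) + d0 * Ez k" for k
  proof -
    have h: "\<And>j. \<bar>\<xi> k $ j\<bar> \<le> 1" "\<And>j. \<bar>\<xi>h k $ j\<bar> \<le> 1" "\<And>j. \<bar>x k $ j\<bar> \<le> X" using inv[of k] by auto
    show ?thesis unfolding Ex_def Ez_def plant_xi[rule_format] obs_xi[rule_format]
        plant_x[rule_format] obs_x[rule_format] ho_def d0_def
      by (rule step(5)[OF uk[of k] h(1) h(2) h(3) X_def[unfolded si_def sc_def sf_def]])
  qed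
  have sf1: "sf < 1" unfolding sf_def sig_bar_def by (rule sigmoid_lt1)
  have si0: "si \<ge> 0" unfolding si_def sig_bar_def using sigmoid_pos less_imp_le by blast
  have sc0: "sc \<ge> 0" unfolding sc_def tanh_bar_def using inf_norm_nonneg by simp
  have X0: "X \<ge> 0" unfolding X_def using si0 sc0 sf1 by simp
  have hf0: "hf \<ge> 0" unfolding hf_def sig_hat_def using sigmoid_pos less_imp_le by blast
  have ho0: "ho \<ge> 0" unfolding ho_def sig_hat_def using sigmoid_pos less_imp_le by blast
  have ha0: "ha \<ge> 0" unfolding ha_def using opnorm2_nonneg X0 si0 sc0
    by (intro add_nonneg_nonneg mult_nonneg_nonneg) auto
  have d00: "d0 \<ge> 0" unfolding d0_def using opnorm2_nonneg X0
    by (intro mult_nonneg_nonneg) auto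
  have sr: "spectral_radius (mat2 hf ha (hf * ho) (d0 + ho * ha)) < 1"
    using rho_hat unfolding Let_def hf_def[symmetric] ho_def[symmetric] si_def[symmetric]
      sc_def[symmetric] sf_def[symmetric] X_def[symmetric] ha_def[symmetric] d0_def
    by (simp add: ac_simps)
  have pr: "hf < 1 \<and> d0 + ho * ha < 1 \<and> ha * (hf * ho) < (1 - hf) * (1 - (d0 + ho * ha))"
    by (rule perron2[OF hf0 ha0 _ _ sr]) (use hf0 ho0 d00 ha0 in auto)
  have "Ex \<longlonglongrightarrow> 0 \<and> Ez \<longlonglongrightarrow> 0"
    by (rule conv2[of Ex Ez hf ha ho d0, OF _ _ s1 s2 hf0 ha0 ho0 d00]) (use pr in \<open>auto simp: Ex_def Ez_def\<close>)
  thus ?thesis unfolding Ex_def Ez_def by (auto intro: tendsto_norm_zero_cancel)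
qed

end
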